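(* Let $\mathsf{C},\mathsf{E}$ be finite-dimensional Hilbert spaces and $\mathsf{A}\cong\mathsf{A}'$ finite-dimensional with $d=\dim\mathsf{A}$. For every operator $Y\in\mathcal{B}(\mathsf{A}'\otimes\mathsf{C}\otimes\mathsf{A}\otimes\mathsf{E})$, \[ \mathbf{E}_{U\sim\mathds{U}(\mathsf{A})}\|\Theta(Y)(U)\|_1\le\|Y\|_1,\qquad \mathbf{E}_{U\sim\mathds{U}(\mathsf{A})}\Big\|\Theta(Y)(U)-\mathbf{E}_{V\sim\mathds{U}(\mathsf{A})}\Theta(Y)(V)\Big\|_1\le 2\|Y\|_1 . \]
   Context: $|\Phi\rangle=d^{-1/2}\sum_i|i\rangle_{A'}|i\rangle_A$. $\Theta(Y)(U)=d^2\,(\langle\Phi|_{A'A}\otimes\mathds{1}_{CE})\,U_AYU_A^\dagger\,(|\Phi\rangle_{A'A}\otimes\mathds{1}_{CE})\in\mathcal{B}(\mathsf{C}\otimes\mathsf{E})$ for $U$ in the unitary group $\mathds{U}(\mathsf{A})$, $U_A$ acting on $\mathsf{A}$ only. $\mathbf{E}$ denotes Haar average. $\|\cdot\|_1$ is the trace norm. *)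

theory Defs
  imports "HOL-Probability.Probability"
begin

text \<open>Finite-dimensional Hilbert spaces are modelled by finite index types:
  A (and A' identified with A via the fixed basis used in Phi) by 'a, C by 'c, E by 'e.
  Operators are complex matrices complex^'n^'m (rows indexed by 'm).\<close>

definition adj :: "complex^'n^'m \<Rightarrow> complex^'m^'n" where
  "adj M = (\<chi> i j. cnj (M $ j $ i))"

definition unitary :: "complex^'n^'n \<Rightarrow> bool" where
  "unitary U \<longleftrightarrow> U ** adj U = mat 1 \<and> adj U ** U = mat 1"

definition psd :: "complex^'n^'n \<Rightarrow> bool" where
  "psd P \<longleftrightarrow> (\<forall>x::complex^'n.
      Im (\<Sum>i\<in>UNIV. cnj (x $ i) * (P *v x) $ i) = 0 \<and>
      Re (\<Sum>i\<in>UNIV. cnj (x $ i) * (P *v x) $ i) \<ge> 0)"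

definition mat_abs :: "complex^'n^'m \<Rightarrow> complex^'n^'n" where
  "mat_abs Z = (THE P. psd P \<and> P ** P = adj Z ** Z)"

definition trace_norm :: "complex^'n^'m \<Rightarrow> real" where
  "trace_norm Z = Re (trace (mat_abs Z))"

definition is_haar :: "(complex^'a^'a) measure \<Rightarrow> bool" where
  "is_haar \<mu> \<longleftrightarrow> prob_space \<mu> \<and> sets \<mu> = sets borel \<and>
     emeasure \<mu> {U. unitary U} = 1 \<and>
     (\<forall>V. unitary V \<longrightarrow> distr \<mu> borel (\<lambda>U. V ** U) = \<mu>)"

text \<open>U_A = 1_{A'} (x) 1_C (x) U (x) 1_E on A' (x) C (x) A (x) E.\<close>
definition embedA :: "complex^'a::finite^'a \<Rightarrow> complex^('a \<times> 'c::finite \<times> 'a \<times> 'e::finite)^('a \<times> 'c \<times> 'a \<times> 'e)" where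
  "embedA U = (\<chi> i j. case i of (a', c, a, e) \<Rightarrow> case j of (b', c2, b, e2) \<Rightarrow>
      if a' = b' \<and> c = c2 \<and> e = e2 then U $ a $ b else 0)"

text \<open>|Phi>_{A'A} (x) 1_{CE}, with |Phi> = d^{-1/2} sum_i |i>_{A'} |i>_A.\<close>
definition phi_iso :: "complex^('c::finite \<times> 'e::finite)^('a::finite \<times> 'c \<times> 'a \<times> 'e)" where
  "phi_iso = (\<chi> i j. case i of (a', c, a, e) \<Rightarrow> case j of (c2, e2) \<Rightarrow>
      if a' = a \<and> c = c2 \<and> e = e2 then complex_of_real (1 / sqrt (real CARD('a))) else 0)"

definition Theta :: "complex^('a::finite \<times> 'c::finite \<times> 'a \<times> 'e::finite)^('a \<times> 'c \<times> 'a \<times> 'e) \<Rightarrow> complex^'a^'a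
                      \<Rightarrow> complex^('c \<times> 'e)^('c \<times> 'e)" where
  "Theta Y U = (real CARD('a))^2 *\<^sub>R
      (adj (phi_iso :: complex^('c \<times> 'e)^('a \<times> 'c \<times> 'a \<times> 'e)) ** (embedA U ** Y ** adj (embedA U)) ** phi_iso)"

end

theory Submission
  imports Defs
begin

definition cip :: "complex^'n \<Rightarrow> complex^'n \<Rightarrow> complex" where
  "cip x y = (\<Sum>i\<in>UNIV. cnj (x$i) * y$i)"

lemma cip_add_right: "cip x (y + z) = cip x y + cip x z"
  by (simp add: cip_def distrib_left sum.distrib)
lemma cip_add_left: "cip (x + y) z = cip x z + cip y z"
  by (simp add: cip_def distrib_right sum.distrib)
lemma cip_diff_right: "cip x (y - z) = cip x y - cip x z"
  by (simp add: cip_def right_diff_distrib sum_subtractf)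
lemma cip_diff_left: "cip (x - y) z = cip x z - cip y z"
  by (simp add: cip_def left_diff_distrib sum_subtractf)
lemma cip_scale_right: "cip x (c *s y) = c * cip x y"
  by (simp add: cip_def sum_distrib_left algebra_simps)
lemma cip_scale_left: "cip (c *s x) y = cnj c * cip x y"
  by (simp add: cip_def sum_distrib_left algebra_simps)
lemma cip_zero_right[simp]: "cip x 0 = 0" by (simp add: cip_def)
lemma cip_zero_left[simp]: "cip 0 x = 0" by (simp add: cip_def)
lemma cip_sum_right: "cip x (\<Sum>k\<in>K. f k) = (\<Sum>k\<in>K. cip x (f k))"
  by (induction K rule: infinite_finite_induct) (auto simp: cip_add_right)
lemma cip_sum_left: "cip (\<Sum>k\<in>K. f k) y = (\<Sum>k\<in>K. cip (f k) y)"
  by (induction K rule: infinite_finite_induct) (auto simp: cip_add_left)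
lemma cip_cnj: "cnj (cip x y) = cip y x"
  by (simp add: cip_def mult.commute)

lemma norm_sq_vec: "(norm (x::complex^'n))^2 = (\<Sum>i\<in>UNIV. (cmod (x$i))^2)"
  by (simp add: norm_vec_def L2_set_def sum_nonneg)

lemma cip_self: "cip x x = complex_of_real ((norm x)^2)"
proof -
  have "cip x x = (\<Sum>i\<in>UNIV. complex_of_real ((cmod (x$i))^2))"
    unfolding cip_def by (rule sum.cong) (auto simp: complex_norm_square[symmetric] mult.commute)
  also have "\<dots> = complex_of_real ((norm x)^2)" by (simp add: norm_sq_vec)
  finally show ?thesis .
qed

lemma cip_self_re: "Re (cip x x) = (norm x)^2" by (simp add: cip_self)

lemma cauchy_schwarz_cip: "cmod (cip x y) \<le> norm x * norm y"
proof -
  have "cmod (cip x y) \<le> (\<Sum>i\<in>UNIV. cmod (cnj (x$i) * y$i))"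
    unfolding cip_def by (rule norm_sum)
  also have "\<dots> = (\<Sum>i\<in>UNIV. \<bar>cmod (x$i)\<bar> * \<bar>cmod (y$i)\<bar>)" by (simp add: norm_mult)
  also have "\<dots> \<le> L2_set (\<lambda>i. cmod (x$i)) UNIV * L2_set (\<lambda>i. cmod (y$i)) UNIV"
    by (rule L2_set_mult_ineq)
  finally show ?thesis by (simp add: norm_vec_def)
qed

lemma adj_nth[simp]: "adj M $ i $ j = cnj (M $ j $ i)"
  by (simp add: adj_def)

lemma adj_adj[simp]: "adj (adj M) = M"
  by (simp add: adj_def vec_eq_iff)

lemma adj_mult: "adj (A ** B) = adj B ** adj A"
  by (simp add: adj_def matrix_matrix_mult_def vec_eq_iff mult.commute)

lemma cip_adj: "cip (adj M *v x) y = cip x (M *v y)"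
proof -
  have "cip (adj M *v x) y = (\<Sum>i\<in>UNIV. \<Sum>j\<in>UNIV. M$j$i * cnj (x$j) * y$i)"
    unfolding cip_def matrix_vector_mult_def
    by (auto simp: sum_distrib_right sum_distrib_left mult_ac intro!: sum.cong)
  also have "\<dots> = (\<Sum>j\<in>UNIV. \<Sum>i\<in>UNIV. M$j$i * cnj (x$j) * y$i)" by (rule sum.swap)
  also have "\<dots> = cip x (M *v y)"
    unfolding cip_def matrix_vector_mult_def
    by (simp add: sum_distrib_left mult_ac)
  finally show ?thesis .
qed

lemma cip_adj2: "cip x (adj M *v y) = cip (M *v x) y"
  using cip_adj[of "adj M" x y] by simp

definition herm :: "complex^'n^'n \<Rightarrow> bool" where
  "herm H \<longleftrightarrow> (\<forall>x y. cip x (H *v y) = cip (H *v x) y)"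

lemma psd_quad: "psd P \<Longrightarrow> Im (cip x (P *v x)) = 0 \<and> Re (cip x (P *v x)) \<ge> 0"
  unfolding psd_def cip_def by blast

lemma psd_herm:
  fixes P :: "complex^'n^'n"
  assumes "psd P" shows "herm P"
  unfolding herm_def
proof (intro allI)
  fix x y :: "complex^'n"
  define B :: "complex^'n \<Rightarrow> complex^'n \<Rightarrow> complex" where "B u v = cip u (P *v v)" for u v
  have r: "Im (B u u) = 0" for u using psd_quad[OF assms] unfolding B_def by blast
  have e1: "B (x + y) (x + y) = B x x + B y y + B x y + B y x"
    unfolding B_def by (simp add: cip_add_left cip_add_right matrix_vector_right_distrib)
  have e2: "B (x + \<i> *s y) (x + \<i> *s y) = B x x + B y y + \<i> * B x y - \<i> * B y x"
    unfolding B_def by (simp add: cip_add_left cip_add_right matrix_vector_right_distrib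
        vector_scalar_commute cip_scale_left cip_scale_right algebra_simps)
  have i1: "Im (B x y + B y x) = 0" using r[of "x+y"] r[of x] r[of y] e1 by simp
  have i2: "Re (B x y - B y x) = 0" using r[of "x + \<i> *s y"] r[of x] r[of y] e2
    by (simp add: algebra_simps)
  have "B x y = cnj (B y x)" using i1 i2 by (simp add: complex_eq_iff)
  thus "cip x (P *v y) = cip (P *v x) y" unfolding B_def by (simp add: cip_cnj)
qed

lemma herm_real: "herm H \<Longrightarrow> Im (cip x (H *v x)) = 0"
proof -
  assume "herm H"
  hence "cip x (H *v x) = cnj (cip x (H *v x))" unfolding herm_def by (metis cip_cnj)
  thus ?thesis by (metis cnj.simps(2) neg_equal_zero)
qed

lemma mat_vec_cong: "(\<forall>x. A *v x = B *v x) \<Longrightarrow> A = B"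
  by (metis matrix_eq)

lemma cip_axis_left: "cip (axis i 1) x = x $ i"
proof -
  have "cip (axis i 1) x = (\<Sum>j\<in>UNIV. if j = i then x $ j else 0)"
    unfolding cip_def axis_def by (rule sum.cong) auto
  thus ?thesis by simp
qed

lemma vec_eq_cip: "(\<forall>z. cip z x = cip z y) \<Longrightarrow> x = y"
  by (metis cip_axis_left vec_eq_iff)

lemma exists_orth:
  fixes e :: "'n::finite \<Rightarrow> complex^'n"
  assumes "I \<noteq> UNIV"
  shows "\<exists>x. x \<noteq> 0 \<and> (\<forall>j\<in>I. cip (e j) x = 0)"
proof (rule ccontr)
  assume na: "\<not> ?thesis"
  define F :: "complex^'n^'n" where "F = (\<chi> j k. if j \<in> I then cnj (e j $ k) else 0)"
  have Fv: "(F *v x) $ j = (if j \<in> I then cip (e j) x else 0)" for x j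
    unfolding F_def matrix_vector_mult_def cip_def by simp
  have "\<forall>x. F *v x = 0 \<longrightarrow> x = 0"
  proof (intro allI impI)
    fix x assume "F *v x = 0"
    hence "\<forall>j\<in>I. cip (e j) x = 0" by (metis Fv zero_index)
    thus "x = 0" using na by blast
  qed
  then obtain B where "B ** F = mat 1" using matrix_left_invertible_ker(1) by blast
  hence FB: "F ** B = mat 1" using matrix_left_right_inverse by blast
  obtain i where i: "i \<notin> I" using assms by blast
  have "(F ** B) $ i $ i = 0" unfolding matrix_matrix_mult_def F_def using i by simp
  thus False using FB by (simp add: mat_def)
qed

lemma scaleR_vec_s: "r *\<^sub>R (x::complex^'n) = complex_of_real r *s x"
  unfolding vec_eq_iff by (simp add: complex_eq_iff)

lemma mv_scaleR: "(H::complex^'n^'m) *v (r *\<^sub>R x) = r *\<^sub>R (H *v x)"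
  by (simp add: scaleR_vec_s vector_scalar_commute)

lemma cip_scaleR_right: "cip x (r *\<^sub>R y) = complex_of_real r * cip x y"
  by (simp add: scaleR_vec_s cip_scale_right)
lemma cip_scaleR_left: "cip (r *\<^sub>R x) y = complex_of_real r * cip x y"
  by (simp add: scaleR_vec_s cip_scale_left)

lemma cont_cip: "continuous_on UNIV (\<lambda>x::complex^'n. cip a x)"
  unfolding cip_def by (intro continuous_intros)

lemma cont_quad: "continuous_on UNIV (\<lambda>x::complex^'n. Re (cip x (H *v x)))"
  unfolding cip_def matrix_vector_mult_def by (intro continuous_intros)

lemma eig_in_compl:
  fixes H :: "complex^'n::finite^'n" and e :: "'n \<Rightarrow> complex^'n"
  assumes herm: "herm H" and I: "I \<noteq> UNIV"
    and eig: "\<forall>j\<in>I. H *v e j = complex_of_real (lam j) *s e j"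
  shows "\<exists>x \<mu>. norm x = 1 \<and> (\<forall>j\<in>I. cip (e j) x = 0) \<and> H *v x = \<mu> *\<^sub>R x"
proof -
  define S where "S = {x::complex^'n. \<forall>j\<in>I. cip (e j) x = 0}"
  define f where "f x = Re (cip x (H *v x))" for x :: "complex^'n"
  have S_add: "x \<in> S \<Longrightarrow> y \<in> S \<Longrightarrow> x + y \<in> S" for x y
    unfolding S_def by (simp add: cip_add_right)
  have S_scale: "x \<in> S \<Longrightarrow> r *\<^sub>R x \<in> S" for x r
    unfolding S_def by (simp add: cip_scaleR_right)
  have "S = (\<Inter>j\<in>I. {x. cip (e j) x = 0})" unfolding S_def by auto
  hence clS: "closed S"
    by (auto intro!: closed_INT closed_Collect_eq cont_cip continuous_intros)
  define K where "K = S \<inter> sphere 0 1"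
  have cK: "compact K" unfolding K_def by (intro closed_Int_compact clS compact_sphere)
  obtain x1 where x1: "x1 \<noteq> 0" "\<forall>j\<in>I. cip (e j) x1 = 0" using exists_orth[OF I] by blast
  have "(1 / norm x1) *\<^sub>R x1 \<in> K" using x1 unfolding K_def
    by (auto simp: S_def cip_scaleR_right)
  hence neK: "K \<noteq> {}" by blast
  have "continuous_on K f" unfolding f_def by (rule continuous_on_subset[OF cont_quad]) simp
  then obtain x0 where x0K: "x0 \<in> K" and x0max: "\<forall>y\<in>K. f y \<le> f x0"
    using continuous_attains_sup[OF cK neK] by blast
  define lm where "lm = f x0"
  have x0S: "x0 \<in> S" and nx0: "norm x0 = 1" using x0K unfolding K_def by auto
  have f_scale: "f (r *\<^sub>R z) = r^2 * f z" for r z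
    unfolding f_def scaleR_vec_s by (simp add: vector_scalar_commute cip_scale_left cip_scale_right power2_eq_square)
  have bound: "f z \<le> lm * (norm z)^2" if zS: "z \<in> S" for z
  proof (cases "z = 0")
    case True thus ?thesis by (simp add: f_def)
  next
    case False
    have "(1 / norm z) *\<^sub>R z \<in> K" using False zS unfolding K_def by (auto intro!: S_scale)
    hence "f ((1 / norm z) *\<^sub>R z) \<le> lm" using x0max lm_def by blast
    hence "f z / (norm z)^2 \<le> lm" by (simp add: f_scale power2_eq_square divide_inverse mult.commute)
    thus ?thesis using False by (simp add: divide_le_eq mult.commute)
  qed
  have q0: "cip x0 (H *v x0) = complex_of_real lm"
    using herm_real[OF herm, of x0] unfolding lm_def f_def by (simp add: complex_eq_iff)
  have c00: "cip x0 x0 = 1" using nx0 by (simp add: cip_self)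
  define y where "y = H *v x0 - lm *\<^sub>R x0"
  have "\<forall>j\<in>I. cip (e j) y = 0" unfolding y_def
  proof
    fix j assume j: "j \<in> I"
    have "cip (e j) (H *v x0) = cip (H *v e j) x0" using herm unfolding herm_def by blast
    also have "\<dots> = 0" using eig j x0S unfolding S_def by (simp add: cip_scale_left)
    finally show "cip (e j) (H *v x0 - lm *\<^sub>R x0) = 0"
      using j x0S unfolding S_def by (simp add: cip_diff_right cip_scaleR_right)
  qed
  hence yS: "y \<in> S" unfolding S_def by blast
  have cx0y: "cip x0 y = 0" unfolding y_def by (simp add: cip_diff_right cip_scaleR_right q0 c00)
  have cyx0: "cip y x0 = 0" using cx0y cip_cnj[of x0 y] by simp
  have Hx0: "H *v x0 = y + lm *\<^sub>R x0" unfolding y_def by simp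
  define a where "a = (norm y)^2"
  have cyHx0: "cip y (H *v x0) = complex_of_real a"
    unfolding Hx0 a_def by (simp add: cip_add_right cip_scaleR_right cyx0 cip_self)
  have cx0Hy: "Re (cip x0 (H *v y)) = a"
  proof -
    have "cip x0 (H *v y) = cip (H *v x0) y" using herm unfolding herm_def by blast
    also have "\<dots> = cnj (cip y (H *v x0))" by (simp add: cip_cnj)
    finally show ?thesis by (simp add: cyHx0)
  qed
  have key: "2 * t * a \<le> t^2 * (lm * a - f y)" if t: "t > 0" for t
  proof -
    define z where "z = x0 + t *\<^sub>R y"
    have zS: "z \<in> S" unfolding z_def by (intro S_add S_scale x0S yS)
    have fz: "f z = lm + 2 * t * a + t^2 * f y"
    proof -
      have "cip z (H *v z) = cip x0 (H *v x0) + complex_of_real t * cip x0 (H *v y)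
          + complex_of_real t * cip y (H *v x0) + complex_of_real (t^2) * cip y (H *v y)"
        unfolding z_def
        by (simp add: matrix_vector_right_distrib mv_scaleR cip_add_left
            cip_add_right cip_scaleR_left cip_scaleR_right algebra_simps power2_eq_square)
      hence "f z = Re (cip x0 (H *v x0)) + t * Re (cip x0 (H *v y)) + t * Re (cip y (H *v x0))
          + t^2 * f y" unfolding f_def by simp
      thus ?thesis using q0 cx0Hy cyHx0 by simp
    qed
    have nz: "(norm z)^2 = 1 + t^2 * a"
    proof -
      have "cip z z = cip x0 x0 + complex_of_real t * cip x0 y
          + complex_of_real t * cip y x0 + complex_of_real (t^2) * cip y y"
        unfolding z_def
        by (simp add: cip_add_left cip_add_right cip_scaleR_left cip_scaleR_right algebra_simps power2_eq_square)
      hence "Re (cip z z) = 1 + t^2 * a" using c00 cx0y cyx0 by (simp add: cip_self a_def)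
      thus ?thesis by (simp add: cip_self_re)
    qed
    have "lm + 2 * t * a + t^2 * f y \<le> lm * (1 + t^2 * a)" using bound[OF zS] fz nz by simp
    thus ?thesis by (simp add: algebra_simps)
  qed
  have "a = 0"
  proof (rule ccontr)
    assume "a \<noteq> 0"
    hence apos: "a > 0" unfolding a_def by simp
    define c where "c = lm * a - f y"
    define t where "t = a / (\<bar>c\<bar> + 1)"
    have tpos: "t > 0" unfolding t_def using apos by simp
    have "2 * t * a \<le> t^2 * c" using key[OF tpos] c_def by simp
    hence "2 * a \<le> t * c" using tpos by (simp add: power2_eq_square mult.assoc)
    also have "\<dots> \<le> t * \<bar>c\<bar>" using tpos by (simp add: mult_left_mono)
    also have "\<dots> < a" unfolding t_def using apos
      by (simp add: divide_less_eq field_simps)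
    finally show False using apos by simp
  qed
  hence "y = 0" unfolding a_def by simp
  hence "H *v x0 = lm *\<^sub>R x0" unfolding y_def by simp
  thus ?thesis using nx0 x0S unfolding S_def by blast
qed

lemma cnj_mult_self: "cnj z * z = (complex_of_real (cmod z))^2"
  by (metis complex_norm_square mult.commute of_real_power)
lemma mult_cnj_self: "z * cnj z = (complex_of_real (cmod z))^2"
  by (metis complex_norm_square of_real_power)

definition onb :: "('n \<Rightarrow> complex^'n) \<Rightarrow> bool" where
  "onb e \<longleftrightarrow> (\<forall>i j. cip (e i) (e j) = (if i = j then 1 else 0))"

lemma spectral_aux:
  fixes H :: "complex^'n::finite^'n" and I :: "'n set" assumes herm: "herm H"
  shows "\<exists>e lam. (\<forall>i\<in>I. \<forall>j\<in>I. cip (e i) (e j) = (if i = j then 1 else 0))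
      \<and> (\<forall>i\<in>I. H *v e i = lam i *\<^sub>R e i)"
proof (induction I rule: finite_induct[OF finite])
  case 1 show ?case by auto
next
  case (2 k I)
  then obtain e lam where o: "\<forall>i\<in>I. \<forall>j\<in>I. cip (e i) (e j) = (if i = j then 1 else 0)"
    and ev: "\<forall>i\<in>I. H *v e i = lam i *\<^sub>R e i" by blast
  have IU: "I \<noteq> UNIV" using 2 by blast
  have ev': "\<forall>j\<in>I. H *v e j = complex_of_real (lam j) *s e j" using ev by (simp add: scaleR_vec_s)
  obtain x \<mu> where x: "norm x = 1" "\<forall>j\<in>I. cip (e j) x = 0" "H *v x = \<mu> *\<^sub>R x"
    using eig_in_compl[OF herm IU ev'] by blast
  have xx: "cip x x = 1" using x(1) by (simp add: cip_self)
  have xe: "\<forall>j\<in>I. cip x (e j) = 0" using x(2) by (metis cip_cnj complex_cnj_zero)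
  show ?case
    apply (rule exI[of _ "e(k := x)"], rule exI[of _ "lam(k := \<mu>)"])
    using o ev x xx xe 2(2) by auto
qed

lemma spectral:
  fixes H :: "complex^'n::finite^'n" assumes herm: "herm H"
  shows "\<exists>e lam. onb e \<and> (\<forall>i. H *v e i = lam i *\<^sub>R e i)"
  using spectral_aux[OF herm, of UNIV] unfolding onb_def by blast

lemma onb_complete:
  fixes e :: "'n::finite \<Rightarrow> complex^'n"
  assumes "onb e"
  shows "x = (\<Sum>i\<in>UNIV. cip (e i) x *s e i)"
proof -
  define E :: "complex^'n^'n" where "E = (\<chi> r c. e c $ r)"
  have "adj E ** E = mat 1"
    using assms unfolding onb_def E_def adj_def matrix_matrix_mult_def cip_def mat_def
    by (simp add: vec_eq_iff)
  hence "E ** adj E = mat 1" using matrix_left_right_inverse by blast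
  hence "x = E *v (adj E *v x)" by (simp add: matrix_vector_mul_assoc)
  also have "\<dots> = (\<Sum>i\<in>UNIV. cip (e i) x *s e i)"
    unfolding E_def adj_def matrix_vector_mult_def cip_def
    by (simp add: vec_eq_iff sum_component mult.commute)
  finally show ?thesis .
qed

lemma mat_eq_onb:
  fixes e :: "'n::finite \<Rightarrow> complex^'n" and A B :: "complex^'n^'m"
  assumes "onb e" "\<forall>i. A *v e i = B *v e i"
  shows "A = B"
proof (rule mat_vec_cong, intro allI)
  fix x
  have "A *v x = A *v (\<Sum>i\<in>UNIV. cip (e i) x *s e i)" using onb_complete[OF assms(1)] by metis
  also have "\<dots> = (\<Sum>i\<in>UNIV. cip (e i) x *s (A *v e i))" by (simp add: vec.sum vector_scalar_commute)
  also have "\<dots> = (\<Sum>i\<in>UNIV. cip (e i) x *s (B *v e i))" using assms(2) by simp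
  also have "\<dots> = B *v (\<Sum>i\<in>UNIV. cip (e i) x *s e i)" by (simp add: vec.sum vector_scalar_commute)
  also have "\<dots> = B *v x" using onb_complete[OF assms(1)] by metis
  finally show "A *v x = B *v x" .
qed

lemma bessel:
  fixes f :: "'k \<Rightarrow> complex^'m"
  assumes K: "finite K" and orth: "\<forall>i\<in>K. \<forall>j\<in>K. i \<noteq> j \<longrightarrow> cip (f i) (f j) = 0"
    and nf: "\<forall>i\<in>K. norm (f i) \<le> 1"
  shows "(\<Sum>i\<in>K. (cmod (cip (f i) u))^2) \<le> (norm u)^2"
proof -
  define c where "c i = cip (f i) u" for i
  define v where "v = u - (\<Sum>i\<in>K. c i *s f i)"
  have cuf: "cip u (f i) = cnj (c i)" for i unfolding c_def by (simp add: cip_cnj)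
  have dbl: "cip (\<Sum>i\<in>K. c i *s f i) (\<Sum>j\<in>K. c j *s f j)
      = (\<Sum>i\<in>K. complex_of_real ((cmod (c i))^2 * (norm (f i))^2))"
  proof -
    have "cip (\<Sum>i\<in>K. c i *s f i) (\<Sum>j\<in>K. c j *s f j)
        = (\<Sum>j\<in>K. \<Sum>i\<in>K. cnj (c i) * c j * cip (f i) (f j))"
      by (simp add: cip_sum_left cip_sum_right cip_scale_left cip_scale_right sum_distrib_left mult_ac)
    also have "\<dots> = (\<Sum>i\<in>K. \<Sum>j\<in>K. cnj (c i) * c j * cip (f i) (f j))"
      by (rule sum.swap)
    also have "\<dots> = (\<Sum>i\<in>K. \<Sum>j\<in>K. if j = i then cnj (c i) * c i * cip (f i) (f i) else 0)"
      using orth by (intro sum.cong refl) auto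
    also have "\<dots> = (\<Sum>i\<in>K. cnj (c i) * c i * cip (f i) (f i))" using K by simp
    also have "\<dots> = (\<Sum>i\<in>K. complex_of_real ((cmod (c i))^2 * (norm (f i))^2))"
      by (intro sum.cong refl) (simp add: cip_self complex_norm_square[symmetric] mult.commute)
    finally show ?thesis .
  qed
  have "cip v v = cip u u - (\<Sum>i\<in>K. complex_of_real ((cmod (c i))^2))
        - (\<Sum>i\<in>K. complex_of_real ((cmod (c i))^2))
        + (\<Sum>i\<in>K. complex_of_real ((cmod (c i))^2 * (norm (f i))^2))"
  proof -
    have a: "cip u (\<Sum>i\<in>K. c i *s f i) = (\<Sum>i\<in>K. complex_of_real ((cmod (c i))^2))"
      by (simp add: cip_sum_right cip_scale_right cuf complex_norm_square[symmetric] mult.commute)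
    have b: "cip (\<Sum>i\<in>K. c i *s f i) u = (\<Sum>i\<in>K. complex_of_real ((cmod (c i))^2))"
      by (simp add: cip_sum_left cip_scale_left c_def[symmetric] cnj_mult_self)
    show ?thesis unfolding v_def
      by (simp add: cip_diff_left cip_diff_right a b dbl)
  qed
  hence "Re (cip v v) = (norm u)^2 - 2 * (\<Sum>i\<in>K. (cmod (c i))^2)
        + (\<Sum>i\<in>K. (cmod (c i))^2 * (norm (f i))^2)"
    by (simp add: cip_self)
  moreover have "Re (cip v v) \<ge> 0" by (simp add: cip_self)
  moreover have "(\<Sum>i\<in>K. (cmod (c i))^2 * (norm (f i))^2) \<le> (\<Sum>i\<in>K. (cmod (c i))^2)"
  proof (intro sum_mono)
    fix i assume "i \<in> K"
    hence "(norm (f i))^2 \<le> 1" using nf by (simp add: power_le_one)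
    thus "(cmod (c i))^2 * (norm (f i))^2 \<le> (cmod (c i))^2"
      by (simp add: mult_left_le)
  qed
  ultimately show ?thesis unfolding c_def by linarith
qed

lemma herm_ZZ: "herm (adj Z ** Z)"
  unfolding herm_def
  by (metis cip_adj cip_adj2 matrix_vector_mul_assoc)

lemma onb_norm: "onb e \<Longrightarrow> norm (e i) = 1"
proof -
  assume "onb e"
  hence "cip (e i) (e i) = 1" unfolding onb_def by simp
  hence "complex_of_real ((norm (e i))^2) = 1" by (simp only: cip_self)
  hence "(norm (e i))^2 = 1" using of_real_eq_1_iff by blast
  thus ?thesis by (smt (verit) norm_ge_zero power2_eq_1_iff)
qed

lemma tn_basis:
  fixes Z :: "complex^'n::finite^'m::finite"
  shows "\<exists>e. onb e \<and> trace_norm Z = (\<Sum>i\<in>UNIV. norm (Z *v e i))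
            \<and> (\<forall>i j. i \<noteq> j \<longrightarrow> cip (Z *v e i) (Z *v e j) = 0)"
proof -
  define M where "M = adj Z ** Z"
  obtain e lam where onb: "onb e" and ev: "\<forall>i. M *v e i = lam i *\<^sub>R e i"
    using spectral[OF herm_ZZ[of Z]] unfolding M_def by blast
  have ee: "cip (e i) (e j) = (if i = j then 1 else 0)" for i j using onb unfolding onb_def by blast
  have MZ: "cip x (M *v y) = cip (Z *v x) (Z *v y)" for x y
    unfolding M_def by (metis cip_adj2 matrix_vector_mul_assoc)
  define s where "s i = norm (Z *v e i)" for i
  have lam: "lam i = (s i)^2" for i
  proof -
    have "cip (e i) (M *v e i) = complex_of_real (lam i)" using ev ee by (simp add: cip_scaleR_right)
    moreover have "cip (e i) (M *v e i) = complex_of_real ((s i)^2)" unfolding s_def MZ by (simp only: cip_self)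
    ultimately show ?thesis using of_real_eq_iff by metis
  qed
  have orthZ: "cip (Z *v e i) (Z *v e j) = 0" if "i \<noteq> j" for i j
    using that ev ee by (simp add: MZ[symmetric] cip_scaleR_right)
  define P :: "complex^'n^'n" where "P = (\<chi> r c. \<Sum>i\<in>UNIV. complex_of_real (s i) * e i $ r * cnj (e i $ c))"
  have Pv: "P *v x = (\<Sum>i\<in>UNIV. (complex_of_real (s i) * cip (e i) x) *s e i)" for x
  proof -
    have "(P *v x) $ r = (\<Sum>i\<in>UNIV. (complex_of_real (s i) * cip (e i) x) *s e i) $ r" for r
    proof -
      have "(P *v x) $ r = (\<Sum>c\<in>UNIV. \<Sum>i\<in>UNIV. complex_of_real (s i) * e i $ r * cnj (e i $ c) * x $ c)"
        by (simp add: P_def matrix_vector_mult_def sum_distrib_right)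
      also have "\<dots> = (\<Sum>i\<in>UNIV. \<Sum>c\<in>UNIV. complex_of_real (s i) * e i $ r * cnj (e i $ c) * x $ c)"
        by (rule sum.swap)
      also have "\<dots> = (\<Sum>i\<in>UNIV. (complex_of_real (s i) * cip (e i) x) *s e i) $ r"
        by (simp add: cip_def sum_component sum_distrib_left mult_ac)
      finally show ?thesis .
    qed
    thus ?thesis by (simp add: vec_eq_iff)
  qed
  have Pe: "P *v e k = s k *\<^sub>R e k" for k
  proof -
    have "P *v e k = (\<Sum>i\<in>UNIV. if i = k then complex_of_real (s k) *s e k else 0)"
      unfolding Pv ee by (intro sum.cong refl) auto
    thus ?thesis by (simp add: scaleR_vec_s)
  qed
  have psdP: "psd P"
  proof -
    have "cip x (P *v x) = complex_of_real (\<Sum>i\<in>UNIV. s i * (cmod (cip (e i) x))^2)" for x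
    proof -
      have "cip x (P *v x) = (\<Sum>i\<in>UNIV. complex_of_real (s i) * (cip (e i) x * cip x (e i)))"
        unfolding Pv by (simp add: cip_sum_right cip_scale_right mult_ac)
      also have "\<dots> = (\<Sum>i\<in>UNIV. complex_of_real (s i * (cmod (cip (e i) x))^2))"
        by (intro sum.cong refl) (metis cip_cnj mult_cnj_self of_real_mult of_real_power)
      finally show ?thesis by simp
    qed
    moreover have "s i \<ge> 0" for i unfolding s_def by simp
    ultimately show ?thesis unfolding psd_def cip_def[symmetric]
      by (simp add: sum_nonneg)
  qed
  have PP: "P ** P = M"
  proof (rule mat_eq_onb[OF onb], intro allI)
    fix k
    show "(P ** P) *v e k = M *v e k"
      by (simp add: matrix_vector_mul_assoc[symmetric] Pe mv_scaleR ev lam power2_eq_square)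
  qed
  have uniq: "Q = P" if Q: "psd Q" "Q ** Q = M" for Q
  proof (rule mat_eq_onb[OF onb], intro allI)
    fix k
    have hQ: "herm Q" using psd_herm[OF Q(1)] .
    have QQ: "Q *v (Q *v x) = M *v x" for x using Q(2) by (simp add: matrix_vector_mul_assoc)
    show "Q *v e k = P *v e k"
    proof (cases "s k = 0")
      case True
      have "cip (Q *v e k) (Q *v e k) = cip (e k) (Q *v (Q *v e k))" using hQ unfolding herm_def by metis
      also have "\<dots> = 0" using True by (simp add: QQ ev lam)
      finally have "Q *v e k = 0" by (simp add: cip_self)
      thus ?thesis using True by (simp add: Pe)
    next
      case False
      hence spos: "s k > 0" unfolding s_def by simp
      define v where "v = Q *v e k - s k *\<^sub>R e k"
      have "Q *v v = - (s k *\<^sub>R v)"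
        unfolding v_def by (simp add: matrix_vector_mult_diff_distrib mv_scaleR QQ ev lam
            power2_eq_square algebra_simps)
      hence "Q *v v = (- s k) *\<^sub>R v" by (simp only: scaleR_minus_left)
      hence "cip v (Q *v v) = complex_of_real (- s k * (norm v)^2)"
        by (simp only: cip_scaleR_right cip_self of_real_mult)
      hence "Re (cip v (Q *v v)) = - (s k * (norm v)^2)" by simp
      moreover have "Re (cip v (Q *v v)) \<ge> 0" using psd_quad[OF Q(1)] by blast
      ultimately have "s k * (norm v)^2 \<le> 0" by simp
      hence "v = 0" using spos by (simp add: mult_le_0_iff)
      thus ?thesis unfolding v_def by (simp add: Pe)
    qed
  qed
  have "mat_abs Z = P"
    unfolding mat_abs_def M_def[symmetric]
  proof (rule the_equality)
    show "psd P \<and> P ** P = M" using psdP PP by blast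
  next
    fix Q assume "psd Q \<and> Q ** Q = M" thus "Q = P" using uniq by blast
  qed
  moreover have "trace P = complex_of_real (\<Sum>i\<in>UNIV. s i)"
  proof -
    have "trace P = (\<Sum>i\<in>UNIV. complex_of_real (s i) * cip (e i) (e i))"
    proof -
      have "trace P = (\<Sum>r\<in>UNIV. \<Sum>i\<in>UNIV. complex_of_real (s i) * e i $ r * cnj (e i $ r))"
        unfolding trace_def P_def by simp
      also have "\<dots> = (\<Sum>i\<in>UNIV. \<Sum>r\<in>UNIV. complex_of_real (s i) * e i $ r * cnj (e i $ r))"
        by (rule sum.swap)
      also have "\<dots> = (\<Sum>i\<in>UNIV. complex_of_real (s i) * cip (e i) (e i))"
        by (simp add: cip_def sum_distrib_left mult_ac)
      finally show ?thesis .
    qed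
    thus ?thesis using ee by simp
  qed
  ultimately have "trace_norm Z = (\<Sum>i\<in>UNIV. s i)" unfolding trace_norm_def by simp
  thus ?thesis using onb orthZ unfolding s_def by blast
qed

lemma trace_norm_nonneg: "trace_norm (Z::complex^'n::finite^'m::finite) \<ge> 0"
  using tn_basis[of Z] by (metis norm_ge_zero sum_nonneg)

lemma onb_bessel:
  fixes e :: "'n::finite \<Rightarrow> complex^'n"
  assumes "onb e" shows "(\<Sum>i\<in>UNIV. (cmod (cip (e i) u))^2) \<le> (norm u)^2"
  using assms by (intro bessel) (auto simp: onb_def onb_norm)

lemma L2_le_from_sq: "(\<Sum>i\<in>A. (g i)^2) \<le> b^2 \<Longrightarrow> b \<ge> 0 \<Longrightarrow> L2_set g A \<le> b"
proof -
  assume a: "(\<Sum>i\<in>A. (g i)^2) \<le> b^2" and b: "b \<ge> 0"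
  have "L2_set g A \<le> sqrt (b^2)" unfolding L2_set_def using a by (rule real_sqrt_le_mono)
  thus ?thesis using b by simp
qed

lemma tn_dual_bound:
  fixes Z :: "complex^'n::finite^'m::finite" and f :: "'n \<Rightarrow> complex^'m"
    and e :: "'n \<Rightarrow> complex^'n" and u :: "'k \<Rightarrow> complex^'m" and v :: "'k \<Rightarrow> complex^'n"
  assumes e: "onb e" and forth: "\<forall>i j. i \<noteq> j \<longrightarrow> cip (f i) (f j) = 0"
    and fn: "\<forall>i. norm (f i) \<le> 1" and K: "finite K"
    and dec: "\<forall>x. Z *v x = (\<Sum>k\<in>K. cip (v k) x *s u k)"
  shows "Re (\<Sum>i\<in>UNIV. cip (f i) (Z *v e i)) \<le> (\<Sum>k\<in>K. norm (u k) * norm (v k))"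
proof -
  have "(\<Sum>i\<in>UNIV. cip (f i) (Z *v e i)) = (\<Sum>i\<in>UNIV. \<Sum>k\<in>K. cip (v k) (e i) * cip (f i) (u k))"
    by (simp add: dec cip_sum_right cip_scale_right)
  also have "\<dots> = (\<Sum>k\<in>K. \<Sum>i\<in>UNIV. cip (v k) (e i) * cip (f i) (u k))" by (rule sum.swap)
  finally have eq: "(\<Sum>i\<in>UNIV. cip (f i) (Z *v e i)) = \<dots>" .
  have "Re (\<Sum>i\<in>UNIV. cip (f i) (Z *v e i)) \<le> cmod (\<Sum>i\<in>UNIV. cip (f i) (Z *v e i))"
    by (rule complex_Re_le_cmod)
  also have "\<dots> \<le> (\<Sum>k\<in>K. cmod (\<Sum>i\<in>UNIV. cip (v k) (e i) * cip (f i) (u k)))"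
    unfolding eq by (rule norm_sum)
  also have "\<dots> \<le> (\<Sum>k\<in>K. norm (u k) * norm (v k))"
  proof (rule sum_mono)
    fix k
    have "cmod (\<Sum>i\<in>UNIV. cip (v k) (e i) * cip (f i) (u k))
        \<le> (\<Sum>i\<in>UNIV. \<bar>cmod (cip (e i) (v k))\<bar> * \<bar>cmod (cip (f i) (u k))\<bar>)"
    proof -
      have "cmod (\<Sum>i\<in>UNIV. cip (v k) (e i) * cip (f i) (u k)) \<le> (\<Sum>i\<in>UNIV. cmod (cip (v k) (e i) * cip (f i) (u k)))"
        by (rule norm_sum)
      also have "\<dots> = (\<Sum>i\<in>UNIV. \<bar>cmod (cip (e i) (v k))\<bar> * \<bar>cmod (cip (f i) (u k))\<bar>)"
      proof (intro sum.cong refl)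
        fix i
        have "cip (v k) (e i) = cnj (cip (e i) (v k))" by (simp add: cip_cnj)
        thus "cmod (cip (v k) (e i) * cip (f i) (u k)) = \<bar>cmod (cip (e i) (v k))\<bar> * \<bar>cmod (cip (f i) (u k))\<bar>"
          by (simp only: norm_mult complex_mod_cnj abs_norm_cancel)
      qed
      finally show ?thesis .
    qed
    also have "\<dots> \<le> L2_set (\<lambda>i. cmod (cip (e i) (v k))) UNIV * L2_set (\<lambda>i. cmod (cip (f i) (u k))) UNIV"
      by (rule L2_set_mult_ineq)
    also have "\<dots> \<le> norm (v k) * norm (u k)"
    proof (rule mult_mono)
      show "L2_set (\<lambda>i. cmod (cip (e i) (v k))) UNIV \<le> norm (v k)"
        using onb_bessel[OF e] by (intro L2_le_from_sq) auto
      show "L2_set (\<lambda>i. cmod (cip (f i) (u k))) UNIV \<le> norm (u k)"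
        using bessel[of UNIV f "u k"] forth fn by (intro L2_le_from_sq) auto
    qed (auto simp: L2_set_nonneg)
    finally show "cmod (\<Sum>i\<in>UNIV. cip (v k) (e i) * cip (f i) (u k)) \<le> norm (u k) * norm (v k)"
      by (simp add: mult.commute)
  qed
  finally show ?thesis .
qed

lemma tn_dual_bound_onb:
  fixes Z :: "complex^'n::finite^'m::finite" and f :: "'n \<Rightarrow> complex^'m" and g :: "'n \<Rightarrow> complex^'n"
  assumes e: "onb e" and forth: "\<forall>i j. i \<noteq> j \<longrightarrow> cip (f i) (f j) = 0"
    and fn: "\<forall>i. norm (f i) \<le> 1"
   and g3: "\<forall>x. Z *v x = (\<Sum>j\<in>UNIV. cip (g j) x *s (Z *v g j))"
  shows "Re (\<Sum>i\<in>UNIV. cip (f i) (Z *v e i)) \<le> (\<Sum>j\<in>UNIV. norm (Z *v g j) * norm (g j))"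
  using tn_dual_bound[where u="\<lambda>j. Z *v g j" and v=g and K=UNIV, OF e forth fn finite g3] .

lemma onb_decomp:
  fixes Y :: "complex^'n::finite^'m"
  assumes "onb g"
  shows "Y *v x = (\<Sum>j\<in>UNIV. cip (g j) x *s (Y *v g j))"
proof -
  have "Y *v x = Y *v (\<Sum>j\<in>UNIV. cip (g j) x *s g j)" using onb_complete[OF assms] by metis
  thus ?thesis by (simp add: vec.sum vector_scalar_commute)
qed

lemma tn_decomp:
  fixes Y :: "complex^'n::finite^'m::finite"
  shows "\<exists>g. onb g \<and> trace_norm Y = (\<Sum>j\<in>UNIV. norm (Y *v g j))
     \<and> (\<forall>x. Y *v x = (\<Sum>j\<in>UNIV. cip (g j) x *s (Y *v g j)))"
proof -
  obtain g where g1: "onb g" and g2: "trace_norm Y = (\<Sum>j\<in>UNIV. norm (Y *v g j))"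
    using tn_basis[of Y] by blast
  have g3: "\<forall>x. Y *v x = (\<Sum>j\<in>UNIV. cip (g j) x *s (Y *v g j))"
    using onb_decomp[OF g1] by blast
  show ?thesis using g1 g2 g3 by blast
qed

lemma tn_upper:
  fixes Z :: "complex^'n::finite^'m::finite" and u :: "'k \<Rightarrow> complex^'m" and v :: "'k \<Rightarrow> complex^'n"
  assumes K: "finite K" and dec: "\<forall>x. Z *v x = (\<Sum>k\<in>K. cip (v k) x *s u k)"
  shows "trace_norm Z \<le> (\<Sum>k\<in>K. norm (u k) * norm (v k))"
proof -
  obtain e where e: "onb e" and tn: "trace_norm Z = (\<Sum>i\<in>UNIV. norm (Z *v e i))"
    and orth: "\<forall>i j. i \<noteq> j \<longrightarrow> cip (Z *v e i) (Z *v e j) = 0"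
    using tn_basis[of Z] by blast
  define f where "f i = (1 / norm (Z *v e i)) *\<^sub>R (Z *v e i)" for i
  have fo: "\<forall>i j. i \<noteq> j \<longrightarrow> cip (f i) (f j) = 0" using orth
    by (simp add: f_def cip_scaleR_left cip_scaleR_right)
  have fn: "\<forall>i. norm (f i) \<le> 1" by (simp add: f_def)
  have "cip (f i) (Z *v e i) = complex_of_real (norm (Z *v e i))" for i
  proof (cases "Z *v e i = 0")
    case True thus ?thesis by (simp add: f_def)
  next
    case False
    thus ?thesis by (simp add: f_def cip_scaleR_left cip_self power2_eq_square)
  qed
  hence "Re (\<Sum>i\<in>UNIV. cip (f i) (Z *v e i)) = trace_norm Z" by (simp add: tn)
  thus ?thesis using tn_dual_bound[OF e fo fn K dec] by simp
qed

lemma tn_lower: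
  fixes Z :: "complex^'n::finite^'m::finite" and f :: "'n \<Rightarrow> complex^'m"
  assumes e: "onb e" and forth: "\<forall>i j. i \<noteq> j \<longrightarrow> cip (f i) (f j) = 0"
    and fn: "\<forall>i. norm (f i) \<le> 1"
  shows "Re (\<Sum>i\<in>UNIV. cip (f i) (Z *v e i)) \<le> trace_norm Z"
proof -
  obtain g where g1: "onb g" and g2: "trace_norm Z = (\<Sum>j\<in>UNIV. norm (Z *v g j))"
    using tn_basis[of Z] by blast
  have g3: "\<forall>x. Z *v x = (\<Sum>j\<in>UNIV. cip (g j) x *s (Z *v g j))"
    using onb_decomp[OF g1] by blast
  have "Re (\<Sum>i\<in>UNIV. cip (f i) (Z *v e i)) \<le> (\<Sum>j\<in>UNIV. norm (Z *v g j) * norm (g j))"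
    using tn_dual_bound_onb[OF e forth fn g3] .
  also have "\<dots> = trace_norm Z" using g1 g2 by (simp add: onb_norm)
  finally show ?thesis .
qed

lemma tn_attained:
  fixes Z :: "complex^'n::finite^'m::finite"
  shows "\<exists>e f. onb e \<and> (\<forall>i j. i \<noteq> j \<longrightarrow> cip (f i) (f j) = 0) \<and> (\<forall>i. norm (f i) \<le> 1)
     \<and> trace_norm Z = Re (\<Sum>i\<in>UNIV. cip (f i) (Z *v e i))"
proof -
  obtain e where e: "onb e" and tn: "trace_norm Z = (\<Sum>i\<in>UNIV. norm (Z *v e i))"
    and orth: "\<forall>i j. i \<noteq> j \<longrightarrow> cip (Z *v e i) (Z *v e j) = 0"
    using tn_basis[of Z] by blast
  define f where "f i = (1 / norm (Z *v e i)) *\<^sub>R (Z *v e i)" for i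
  have fo: "\<forall>i j. i \<noteq> j \<longrightarrow> cip (f i) (f j) = 0" using orth
    by (simp add: f_def cip_scaleR_left cip_scaleR_right)
  have fn: "\<forall>i. norm (f i) \<le> 1" by (simp add: f_def)
  have "cip (f i) (Z *v e i) = complex_of_real (norm (Z *v e i))" for i
  proof (cases "Z *v e i = 0")
    case True thus ?thesis by (simp add: f_def)
  next
    case False
    thus ?thesis by (simp add: f_def cip_scaleR_left cip_self power2_eq_square)
  qed
  hence "trace_norm Z = Re (\<Sum>i\<in>UNIV. cip (f i) (Z *v e i))" by (simp add: tn)
  thus ?thesis using e fo fn by blast
qed

lemma haar_prob: "is_haar \<mu> \<Longrightarrow> prob_space \<mu>" unfolding is_haar_def by blast
lemma haar_sets: "is_haar \<mu> \<Longrightarrow> sets \<mu> = sets borel" unfolding is_haar_def by blast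
lemma haar_inv: "is_haar \<mu> \<Longrightarrow> unitary V \<Longrightarrow> distr \<mu> borel (\<lambda>U. V ** U) = \<mu>"
  unfolding is_haar_def by blast

lemma haar_AE: assumes "is_haar \<mu>" shows "AE U in \<mu>. unitary U"
proof -
  have e: "emeasure \<mu> {U. unitary U} = 1" using assms unfolding is_haar_def by blast
  have P: "prob_space \<mu>" using haar_prob[OF assms] .
  have "measure \<mu> {U. unitary U} = 1" using e by (simp add: measure_def)
  hence "AE U in \<mu>. U \<in> {U. unitary U}" using prob_space.AE_prob_1[OF P] by blast
  thus ?thesis by simp
qed

lemma haar_meas:
  assumes "is_haar \<mu>" "continuous_on UNIV f"
  shows "f \<in> borel_measurable \<mu>"
proof -
  have "f \<in> borel_measurable borel" using assms(2) by (rule borel_measurable_continuous_onI)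
  thus ?thesis using measurable_cong_sets[OF haar_sets[OF assms(1)] refl] by blast
qed

lemma haar_fin: "is_haar \<mu> \<Longrightarrow> finite_measure \<mu>"
  using haar_prob prob_space.finite_measure by blast

lemma haar_integrable:
  fixes f :: "complex^'a::finite^'a \<Rightarrow> 'b::{banach, second_countable_topology}"
  assumes "is_haar \<mu>" "continuous_on UNIV f" "\<And>U. unitary U \<Longrightarrow> norm (f U) \<le> B"
  shows "integrable \<mu> f"
proof -
  have "AE U in \<mu>. norm (f U) \<le> B"
    apply (rule AE_mp[OF haar_AE[OF assms(1)]])
    apply (rule AE_I2)
    using assms(3) by blast
  thus ?thesis by (rule finite_measure.integrable_const_bound[OF haar_fin[OF assms(1)] _ haar_meas[OF assms(1,2)]])
qed

lemma cont_matmul: "continuous_on UNIV (\<lambda>U::complex^'a^'a. V ** U)"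
  unfolding matrix_matrix_mult_def by (intro continuous_intros)

lemma haar_invariant:
  fixes f :: "complex^'a^'a \<Rightarrow> 'b::{banach, second_countable_topology}"
  assumes h: "is_haar \<mu>" and V: "unitary V" and f: "continuous_on UNIV f"
  shows "(\<integral>U. f U \<partial>\<mu>) = (\<integral>U. f (V ** U) \<partial>\<mu>)"
proof -
  have g: "(\<lambda>U. V ** U) \<in> \<mu> \<rightarrow>\<^sub>M borel"
    using haar_meas[OF h cont_matmul] .
  have fm: "f \<in> borel_measurable borel" using f by (rule borel_measurable_continuous_onI)
  have "(\<integral>U. f U \<partial>\<mu>) = (\<integral>U. f U \<partial>(distr \<mu> borel (\<lambda>U. V ** U)))" using haar_inv[OF h V] by simp
  also have "\<dots> = (\<integral>U. f (V ** U) \<partial>\<mu>)" by (rule integral_distr[OF g fm])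
  finally show ?thesis .
qed

lemma unitary_entry: assumes "unitary U" shows "cmod (U $ a $ b) \<le> 1"
proof -
  have "(adj U ** U) $ b $ b = 1" using assms unfolding unitary_def by (simp add: mat_def)
  hence "(\<Sum>c\<in>UNIV. cnj (U $ c $ b) * U $ c $ b) = 1" by (simp add: matrix_matrix_mult_def)
  hence "(\<Sum>c\<in>UNIV. complex_of_real ((cmod (U $ c $ b))^2)) = 1" by (simp add: cnj_mult_self)
  hence s: "(\<Sum>c\<in>UNIV. (cmod (U $ c $ b))^2) = 1" by (metis of_real_eq_1_iff of_real_sum)
  have "(cmod (U $ a $ b))^2 \<le> (\<Sum>c\<in>UNIV. (cmod (U $ c $ b))^2)"
    by (rule member_le_sum) auto
  hence "(cmod (U $ a $ b))^2 \<le> 1" using s by simp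
  thus ?thesis by (simp add: power_le_one_iff abs_square_le_1)
qed

lemma unitary_selfinv: "adj V = V \<Longrightarrow> V ** V = mat 1 \<Longrightarrow> unitary V"
  unfolding unitary_def by simp

lemma sum_delta_mult: fixes a :: "'a::finite" shows "(\<Sum>c\<in>UNIV. (if a = c then s else 0) * f c) = (s * f a :: complex)"
proof -
  have "(\<Sum>c\<in>UNIV. (if a = c then s else 0) * f c) = (\<Sum>c\<in>UNIV. if a = c then s * f a else 0)"
    by (intro sum.cong refl) auto
  thus ?thesis by (simp add: sum.delta')
qed

definition sgnmat :: "'a::finite \<Rightarrow> complex^'a^'a" where
  "sgnmat k = (\<chi> i j. if i = j then (if i = k then -1 else 1) else 0)"

lemma sgnmat_mult: "(sgnmat k ** U) $ a $ b = (if a = k then -1 else 1) * U $ a $ b"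
  unfolding matrix_matrix_mult_def sgnmat_def by (simp add: sum_delta_mult)

lemma sgnmat_unitary: "unitary (sgnmat k)"
proof (rule unitary_selfinv)
  show "adj (sgnmat k) = sgnmat k" by (simp add: adj_def sgnmat_def vec_eq_iff)
  show "sgnmat k ** sgnmat k = mat 1"
    by (simp add: vec_eq_iff sgnmat_mult mat_def) (simp add: sgnmat_def)
qed

definition trp :: "'a \<Rightarrow> 'a \<Rightarrow> 'a \<Rightarrow> 'a" where
  "trp k l i = (if i = k then l else if i = l then k else i)"

lemma trp_trp[simp]: "trp k l (trp k l i) = i" unfolding trp_def by auto

definition permmat :: "'a::finite \<Rightarrow> 'a \<Rightarrow> complex^'a^'a" where
  "permmat k l = (\<chi> i j. if j = trp k l i then 1 else 0)"

lemma permmat_mult: "(permmat k l ** U) $ a $ b = U $ (trp k l a) $ b"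
proof -
  have "(permmat k l ** U) $ a $ b = (\<Sum>c\<in>UNIV. (if trp k l a = c then 1 else 0) * U $ c $ b)"
    unfolding matrix_matrix_mult_def permmat_def by (simp add: eq_commute)
  thus ?thesis by (simp only: sum_delta_mult) simp
qed

lemma permmat_unitary: "unitary (permmat k l)"
proof (rule unitary_selfinv)
  show "adj (permmat k l) = permmat k l"
    unfolding adj_def permmat_def vec_eq_iff by (auto simp: trp_def)
  show "permmat k l ** permmat k l = mat 1"
    by (simp add: vec_eq_iff permmat_mult mat_def) (auto simp: permmat_def)
qed

definition hq :: "(complex^'a^'a) measure \<Rightarrow> 'a \<Rightarrow> 'a \<Rightarrow> 'a \<Rightarrow> 'a \<Rightarrow> complex" where
  "hq \<mu> a b a' b' = (\<integral>U. U$a$b * cnj (U$a'$b') \<partial>\<mu>)"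

lemma cont_entry2: "continuous_on UNIV (\<lambda>U::complex^'a::finite^'a. U$a$b * cnj (U$a'$b'))"
  by (intro continuous_intros)

lemma hq_integrable:
  fixes \<mu> :: "(complex^'a::finite^'a) measure"
  assumes h: "is_haar \<mu>" shows "integrable \<mu> (\<lambda>U. U$a$b * cnj (U$a'$b'))"
proof (rule haar_integrable[OF h cont_entry2])
  fix U :: "complex^'a^'a" assume "unitary U"
  hence "cmod (U$a$b) \<le> 1" "cmod (U$a'$b') \<le> 1" by (auto intro: unitary_entry)
  thus "norm (U$a$b * cnj (U$a'$b')) \<le> 1" by (simp add: norm_mult mult_le_one)
qed

lemma hq_sgn:
  fixes \<mu> :: "(complex^'a::finite^'a) measure"
  assumes h: "is_haar \<mu>"
  shows "hq \<mu> a b a' b' = ((if a = k then -1 else 1) * (if a' = k then -1 else 1)) * hq \<mu> a b a' b'"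
proof -
  have "hq \<mu> a b a' b' = (\<integral>U. (sgnmat k ** U)$a$b * cnj ((sgnmat k ** U)$a'$b') \<partial>\<mu>)"
    unfolding hq_def by (rule haar_invariant[OF h sgnmat_unitary cont_entry2])
  also have "\<dots> = (\<integral>U. ((if a = k then -1 else 1) * (if a' = k then -1 else 1)) * (U$a$b * cnj (U$a'$b')) \<partial>\<mu>)"
    by (intro Bochner_Integration.integral_cong refl) (simp add: sgnmat_mult)
  also have "\<dots> = ((if a = k then -1 else 1) * (if a' = k then -1 else 1)) * hq \<mu> a b a' b'"
    unfolding hq_def by (rule integral_mult_right_zero)
  finally show ?thesis .
qed

lemma hq_off:
  fixes \<mu> :: "(complex^'a::finite^'a) measure"
  assumes h: "is_haar \<mu>" and ne: "a \<noteq> a'"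
  shows "hq \<mu> a b a' b' = 0"
  using hq_sgn[OF h, of a b a' b' a] ne by simp

lemma hq_perm:
  fixes \<mu> :: "(complex^'a::finite^'a) measure"
  assumes h: "is_haar \<mu>"
  shows "hq \<mu> a b a' b' = hq \<mu> (trp k l a) b (trp k l a') b'"
proof -
  have "hq \<mu> a b a' b' = (\<integral>U. (permmat k l ** U)$a$b * cnj ((permmat k l ** U)$a'$b') \<partial>\<mu>)"
    unfolding hq_def by (rule haar_invariant[OF h permmat_unitary cont_entry2])
  thus ?thesis unfolding hq_def by (simp add: permmat_mult)
qed

lemma hq_trace:
  fixes \<mu> :: "(complex^'a::finite^'a) measure"
  assumes h: "is_haar \<mu>"
  shows "(\<Sum>a\<in>UNIV. hq \<mu> a b a b') = (if b' = b then 1 else 0)"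
proof -
  have "(\<Sum>a\<in>UNIV. hq \<mu> a b a b') = (\<integral>U. (\<Sum>a\<in>UNIV. U$a$b * cnj (U$a$b')) \<partial>\<mu>)"
    unfolding hq_def using Bochner_Integration.integral_sum[where I=UNIV and M=\<mu> and f="\<lambda>a U. U$a$b * cnj (U$a$b')"] hq_integrable[OF h] by simp
  also have "\<dots> = (\<integral>U. (if b' = b then 1 else 0) \<partial>\<mu>)"
  proof (rule integral_cong_AE)
    show "(\<lambda>U. \<Sum>a\<in>UNIV. U$a$b * cnj (U$a$b')) \<in> borel_measurable \<mu>"
      by (rule haar_meas[OF h]) (intro continuous_intros)
    show "(\<lambda>U. if b' = b then 1 else 0 :: complex) \<in> borel_measurable \<mu>" by simp
    show "AE U in \<mu>. (\<Sum>a\<in>UNIV. U$a$b * cnj (U$a$b')) = (if b' = b then 1 else 0)"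
      apply (rule AE_mp[OF haar_AE[OF h]])
      apply (rule AE_I2)
    proof
      fix U :: "complex^'a^'a" assume "unitary U"
      hence "(adj U ** U) $ b' $ b = (if b' = b then 1 else 0)" unfolding unitary_def by (simp add: mat_def)
      thus "(\<Sum>a\<in>UNIV. U$a$b * cnj (U$a$b')) = (if b' = b then 1 else 0)"
        by (simp add: matrix_matrix_mult_def mult.commute)
    qed
  qed
  also have "\<dots> = (if b' = b then 1 else 0)"
    using prob_space.prob_space[OF haar_prob[OF h]] by simp
  finally show ?thesis .
qed

lemma hq_formula:
  fixes \<mu> :: "(complex^'a::finite^'a) measure"
  assumes h: "is_haar \<mu>"
  shows "hq \<mu> a b a' b' = (if a = a' \<and> b = b' then 1 / of_nat CARD('a) else 0)"
proof (cases "a = a'")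
  case False thus ?thesis using hq_off[OF h False] by simp
next
  case True
  have eq: "hq \<mu> c b c b' = hq \<mu> a b a b'" for c
    using hq_perm[OF h, of c b c b' a c] by (simp add: trp_def)
  have "(\<Sum>c\<in>UNIV. hq \<mu> c b c b') = (\<Sum>c\<in>(UNIV::'a set). hq \<mu> a b a b')"
    by (rule sum.cong[OF refl eq])
  hence "(\<Sum>c\<in>UNIV. hq \<mu> c b c b') = of_nat CARD('a) * hq \<mu> a b a b'" by simp
  hence "of_nat CARD('a) * hq \<mu> a b a b' = (if b' = b then 1 else 0)" using hq_trace[OF h] by simp
  hence "hq \<mu> a b a b' = (if b' = b then 1 else 0) / of_nat CARD('a)"
    by (simp add: eq_divide_eq mult.commute)
  thus ?thesis using True by auto
qed

lemma sum_filter_reindex: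
  fixes g :: "'u::finite \<Rightarrow> 'x::finite"
  assumes "inj g" "\<And>x. P x \<longleftrightarrow> x \<in> range g"
  shows "(\<Sum>x\<in>UNIV. if P x then f x else 0) = (\<Sum>y\<in>UNIV. (f (g y) :: 'b::comm_monoid_add))"
proof -
  have "(\<Sum>x\<in>UNIV. if P x then f x else 0) = (\<Sum>x\<in>{x\<in>UNIV. P x}. f x)"
    by (rule sum.inter_filter[symmetric]) simp
  also have "{x\<in>UNIV. P x} = range g" using assms(2) by blast
  also have "(\<Sum>x\<in>range g. f x) = (\<Sum>y\<in>UNIV. f (g y))"
    using sum.reindex[OF assms(1)] by simp
  finally show ?thesis .
qed

lemma embedA_mv:
  fixes U :: "complex^'a::finite^'a" and w :: "complex^('a \<times> 'c::finite \<times> 'a \<times> 'e::finite)"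
  shows "(embedA U *v w) $ (a', c, a, e) = (\<Sum>b\<in>UNIV. U$a$b * w$(a', c, b, e))"
proof -
  have "(embedA U *v w) $ (a', c, a, e) = (\<Sum>j\<in>UNIV. if (\<exists>b. j = (a', c, b, e)) then U$a$(fst (snd (snd j))) * w$j else 0)"
    unfolding matrix_vector_mult_def embedA_def vec_lambda_beta
    by (intro sum.cong refl) (auto split: prod.splits)
  also have "\<dots> = (\<Sum>b\<in>UNIV. U$a$b * w$(a', c, b, e))"
    by (subst sum_filter_reindex[where g="\<lambda>b. (a', c, b, e)"]) (auto simp: inj_def)
  finally show ?thesis .
qed

lemma adjphi_mv:
  fixes z :: "complex^('a::finite \<times> 'c::finite \<times> 'a \<times> 'e::finite)"
  shows "(adj (phi_iso :: complex^('c \<times> 'e)^('a \<times> 'c \<times> 'a \<times> 'e)) *v z) $ (c, e)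
     = complex_of_real (1 / sqrt (real CARD('a))) * (\<Sum>a\<in>UNIV. z$(a, c, a, e))"
proof -
  have "(adj (phi_iso :: complex^('c \<times> 'e)^('a \<times> 'c \<times> 'a \<times> 'e)) *v z) $ (c, e)
      = (\<Sum>j\<in>UNIV. if (\<exists>a. j = (a, c, a, e)) then complex_of_real (1 / sqrt (real CARD('a))) * z$j else 0)"
    unfolding matrix_vector_mult_def phi_iso_def adj_def vec_lambda_beta
    by (intro sum.cong refl) (auto split: prod.splits)
  also have "\<dots> = (\<Sum>a\<in>UNIV. complex_of_real (1 / sqrt (real CARD('a))) * z$(a, c, a, e))"
    by (subst sum_filter_reindex[where g="\<lambda>a. (a, c, a, e)"]) (auto simp: inj_def)
  finally show ?thesis by (simp add: sum_distrib_left)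
qed

definition phiU :: "complex^'a::finite^'a \<Rightarrow> complex^('a \<times> 'c::finite \<times> 'a \<times> 'e::finite) \<Rightarrow> complex^('c \<times> 'e)" where
  "phiU U w = (\<chi> p. complex_of_real (1 / sqrt (real CARD('a))) *
       (\<Sum>a\<in>UNIV. \<Sum>b\<in>UNIV. U$a$b * w$(a, fst p, b, snd p)))"

lemma phiU_eq:
  fixes U :: "complex^'a::finite^'a" and w :: "complex^('a \<times> 'c::finite \<times> 'a \<times> 'e::finite)"
  shows "adj (phi_iso :: complex^('c \<times> 'e)^('a \<times> 'c \<times> 'a \<times> 'e)) *v (embedA U *v w) = phiU U w"
  unfolding vec_eq_iff
proof
  fix p :: "'c \<times> 'e"
  obtain c e where p: "p = (c, e)" by (cases p)
  show "(adj (phi_iso :: complex^('c \<times> 'e)^('a \<times> 'c \<times> 'a \<times> 'e)) *v (embedA U *v w)) $ p = phiU U w $ p"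
    unfolding p adjphi_mv embedA_mv phiU_def by simp
qed

lemma sum_pair: "(\<Sum>x\<in>(UNIV::('u::finite \<times> 'v::finite) set). f x) = (\<Sum>u\<in>UNIV. \<Sum>v\<in>UNIV. f (u, v))"
  by (simp add: sum.cartesian_product)

lemma sum_delta2:
  fixes f :: "'a::finite \<Rightarrow> 'b::finite \<Rightarrow> complex"
  shows "(\<Sum>a'\<in>UNIV. \<Sum>b'\<in>UNIV. (if a' = a \<and> b' = b then x else 0) * f a' b') = x * f a b"
proof -
  have i: "(\<Sum>b'\<in>UNIV. (if a' = a \<and> b' = b then x else 0) * f a' b') = (if a' = a then x * f a' b else 0)" for a'
  proof -
    have "(\<Sum>b'\<in>UNIV. (if a' = a \<and> b' = b then x else 0) * f a' b')
        = (\<Sum>b'\<in>UNIV. if b' = b then (if a' = a then x * f a' b else 0) else 0)"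
      by (intro sum.cong refl) auto
    thus ?thesis by simp
  qed
  show ?thesis by (simp add: i)
qed

lemma sum_delta4:
  fixes f :: "'a::finite \<Rightarrow> 'b::finite \<Rightarrow> 'b \<Rightarrow> complex"
  shows "(\<Sum>a'\<in>UNIV. \<Sum>b\<in>UNIV. \<Sum>b'\<in>UNIV. (if a' = a \<and> b' = b then x else 0) * f a' b b')
       = (\<Sum>b\<in>UNIV. x * f a b b)"
proof -
  have i: "(\<Sum>b'\<in>UNIV. (if a' = a \<and> b' = b then x else 0) * f a' b b') = (if a' = a then x * f a' b b else 0)" for a' b
  proof -
    have "(\<Sum>b'\<in>UNIV. (if a' = a \<and> b' = b then x else 0) * f a' b b')
        = (\<Sum>b'\<in>UNIV. if b' = b then (if a' = a then x * f a' b b else 0) else 0)"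
      by (intro sum.cong refl) auto
    thus ?thesis by simp
  qed
  have "(\<Sum>a'\<in>UNIV. \<Sum>b\<in>UNIV. \<Sum>b'\<in>UNIV. (if a' = a \<and> b' = b then x else 0) * f a' b b')
      = (\<Sum>a'\<in>UNIV. \<Sum>b\<in>UNIV. if a' = a then x * f a' b b else 0)"
    by (intro sum.cong refl) (rule i)
  also have "\<dots> = (\<Sum>b\<in>UNIV. \<Sum>a'\<in>UNIV. if a' = a then x * f a' b b else 0)" by (rule sum.swap)
  also have "\<dots> = (\<Sum>b\<in>UNIV. x * f a b b)" by simp
  finally show ?thesis .
qed

lemma phiU_second_moment:
  fixes \<mu> :: "(complex^'a::finite^'a) measure" and w :: "complex^('a \<times> 'c::finite \<times> 'a \<times> 'e::finite)"
  assumes h: "is_haar \<mu>"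
  shows "integrable \<mu> (\<lambda>U. (norm (phiU U w))^2)
     \<and> (\<integral>U. (norm (phiU U w))^2 \<partial>\<mu>) = (norm w)^2 / (real CARD('a))^2"
proof -
  define D :: complex where "D = of_nat CARD('a)"
  define k :: complex where "k = complex_of_real (1 / sqrt (real CARD('a)))"
  have kk: "cnj k * k = 1 / D"
  proof -
    have "cnj k * k = complex_of_real ((1 / sqrt (real CARD('a)))^2)" unfolding k_def
      by (simp only: complex_cnj_complex_of_real of_real_mult power2_eq_square)
    also have "\<dots> = complex_of_real (1 / real CARD('a))" by (simp add: power_divide)
    finally show ?thesis unfolding D_def by simp
  qed
  define T where "T a b a' b' c e = w$(a', c, b', e) * cnj (w$(a, c, b, e))" for a b a' b' c e
  define G where "G U = (1/D) * (\<Sum>c\<in>UNIV. \<Sum>e\<in>UNIV. \<Sum>a\<in>UNIV. \<Sum>a'\<in>UNIV. \<Sum>b\<in>UNIV. \<Sum>b'\<in>UNIV.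
         (U$a'$b' * cnj (U$a$b)) * T a b a' b' c e)" for U :: "complex^'a^'a"
  have Gn: "complex_of_real ((norm (phiU U w))^2) = G U" for U
  proof -
    have "complex_of_real ((norm (phiU U w))^2) = cip (phiU U w) (phiU U w)" by (simp add: cip_self)
    also have "\<dots> = (\<Sum>c\<in>UNIV. \<Sum>e\<in>UNIV. (cnj k * k) *
        (cnj (\<Sum>a\<in>UNIV. \<Sum>b\<in>UNIV. U$a$b * w$(a, c, b, e)) * (\<Sum>a\<in>UNIV. \<Sum>b\<in>UNIV. U$a$b * w$(a, c, b, e))))"
      unfolding cip_def phiU_def k_def[symmetric] by (simp add: sum_pair mult_ac)
    also have "\<dots> = G U"
      unfolding G_def kk T_def
      by (simp add: sum_distrib_left sum_distrib_right cnj_sum mult_ac)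
    finally show ?thesis .
  qed
  have Gi: "integrable \<mu> G"
    unfolding G_def using hq_integrable[OF h] by simp
  have GI: "(\<integral>U. G U \<partial>\<mu>) = (1/D) * (\<Sum>c\<in>UNIV. \<Sum>e\<in>UNIV. \<Sum>a\<in>UNIV. \<Sum>a'\<in>UNIV. \<Sum>b\<in>UNIV. \<Sum>b'\<in>UNIV.
         hq \<mu> a' b' a b * T a b a' b' c e)"
    unfolding G_def hq_def using hq_integrable[OF h] by simp
  also have "\<dots> = (1/D) * (\<Sum>c\<in>UNIV. \<Sum>e\<in>UNIV. \<Sum>a\<in>UNIV. \<Sum>b\<in>UNIV. (1/D) * T a b a b c e)"
    unfolding hq_formula[OF h] D_def by (simp add: sum_delta4)
  finally have GI': "(\<integral>U. G U \<partial>\<mu>) = \<dots>" .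
  have nw: "complex_of_real ((norm w)^2) = (\<Sum>c\<in>UNIV. \<Sum>e\<in>UNIV. \<Sum>a\<in>UNIV. \<Sum>b\<in>UNIV. T a b a b c e)"
  proof -
    have "complex_of_real ((norm w)^2) = (\<Sum>a\<in>UNIV. \<Sum>c\<in>UNIV. \<Sum>b\<in>UNIV. \<Sum>e\<in>UNIV. T a b a b c e)"
      unfolding cip_self[symmetric] cip_def T_def by (simp add: sum_pair mult.commute)
    also have "\<dots> = (\<Sum>c\<in>UNIV. \<Sum>a\<in>UNIV. \<Sum>b\<in>UNIV. \<Sum>e\<in>UNIV. T a b a b c e)" by (rule sum.swap)
    also have "\<dots> = (\<Sum>c\<in>UNIV. \<Sum>a\<in>UNIV. \<Sum>e\<in>UNIV. \<Sum>b\<in>UNIV. T a b a b c e)"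
      by (intro sum.cong refl sum.swap)
    also have "\<dots> = (\<Sum>c\<in>UNIV. \<Sum>e\<in>UNIV. \<Sum>a\<in>UNIV. \<Sum>b\<in>UNIV. T a b a b c e)"
      by (intro sum.cong refl sum.swap)
    finally show ?thesis .
  qed
  have GIw: "(\<integral>U. G U \<partial>\<mu>) = complex_of_real ((norm w)^2 / (real CARD('a))^2)"
  proof -
    have "(1/D) * (\<Sum>c\<in>UNIV. \<Sum>e\<in>UNIV. \<Sum>a\<in>UNIV. \<Sum>b\<in>UNIV. (1/D) * T a b a b c e)
        = (1/D) * (1/D) * (\<Sum>c\<in>UNIV. \<Sum>e\<in>UNIV. \<Sum>a\<in>UNIV. \<Sum>b\<in>UNIV. T a b a b c e)"
      by (simp add: sum_distrib_left mult.assoc)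
    also have "\<dots> = (1/D) * (1/D) * complex_of_real ((norm w)^2)" by (simp only: nw)
    also have "\<dots> = complex_of_real ((norm w)^2 / (real CARD('a))^2)"
      by (simp add: D_def power2_eq_square)
    finally show ?thesis unfolding GI' .
  qed
  have eqR: "(\<lambda>U. (norm (phiU U w))^2) = (\<lambda>U. Re (G U))"
    using Gn by (metis Re_complex_of_real)
  have i1: "integrable \<mu> (\<lambda>U. (norm (phiU U w))^2)" unfolding eqR using integrable_Re[OF Gi] .
  have "(\<integral>U. (norm (phiU U w))^2 \<partial>\<mu>) = Re (\<integral>U. G U \<partial>\<mu>)" unfolding eqR by (rule integral_Re[OF Gi])
  also have "\<dots> = (norm w)^2 / (real CARD('a))^2" unfolding GIw by simp
  finally show ?thesis using i1 by blast
qed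

lemma scaleR_mv: "((r::real) *\<^sub>R (M::complex^'n^'m)) *v x = r *\<^sub>R (M *v x)"
  by (simp add: vec_eq_iff matrix_vector_mult_def scaleR_sum_right)

lemma scaleR_s_commute: "(r::real) *\<^sub>R ((c::complex) *s (v::complex^'n)) = c *s (r *\<^sub>R v)"
  by (simp add: vec_eq_iff)

lemma phiU_zero[simp]: "phiU U 0 = 0"
  by (simp add: phiU_def vec_eq_iff)

lemma Theta_mv:
  fixes Y :: "complex^('a::finite \<times> 'c::finite \<times> 'a \<times> 'e::finite)^('a \<times> 'c \<times> 'a \<times> 'e)"
    and U :: "complex^'a^'a"
  assumes g: "onb g"
  shows "Theta Y U *v x = (\<Sum>j\<in>UNIV. cip (phiU U (g j)) x *s
            ((real CARD('a))^2 *\<^sub>R phiU U (Y *v g j)))"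
proof -
  define E where "E = (embedA U :: complex^('a \<times> 'c \<times> 'a \<times> 'e)^('a \<times> 'c \<times> 'a \<times> 'e))"
  define P where "P = (phi_iso :: complex^('c \<times> 'e)^('a \<times> 'c \<times> 'a \<times> 'e))"
  have c: "cip (g j) (adj E *v (P *v x)) = cip (phiU U (g j)) x" for j
  proof -
    have "cip (g j) (adj E *v (P *v x)) = cip (E *v g j) (P *v x)" by (rule cip_adj2)
    also have "\<dots> = cip (adj P *v (E *v g j)) x" by (rule cip_adj[symmetric])
    also have "\<dots> = cip (phiU U (g j)) x" unfolding P_def E_def by (simp add: phiU_eq)
    finally show ?thesis .
  qed
  have "Theta Y U *v x = (real CARD('a))^2 *\<^sub>R (adj P *v (E *v (Y *v (adj E *v (P *v x)))))"
    unfolding Theta_def E_def[symmetric] P_def[symmetric] scaleR_mv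
    by (simp add: matrix_vector_mul_assoc matrix_mul_assoc)
  also have "Y *v (adj E *v (P *v x)) = (\<Sum>j\<in>UNIV. cip (phiU U (g j)) x *s (Y *v g j))"
    using onb_decomp[OF g, where Y=Y and x="adj E *v (P *v x)"] by (simp only: c)
  also have "adj P *v (E *v (\<Sum>j\<in>UNIV. cip (phiU U (g j)) x *s (Y *v g j)))
      = (\<Sum>j\<in>UNIV. cip (phiU U (g j)) x *s phiU U (Y *v g j))"
    by (simp add: vec.sum vector_scalar_commute P_def E_def phiU_eq)
  finally show ?thesis by (simp add: scaleR_sum_right scaleR_s_commute)
qed

definition Bd :: "complex^('a::finite \<times> 'c::finite \<times> 'a \<times> 'e::finite)^('a \<times> 'c \<times> 'a \<times> 'e)
   \<Rightarrow> ('a \<times> 'c \<times> 'a \<times> 'e \<Rightarrow> complex^('a \<times> 'c \<times> 'a \<times> 'e)) \<Rightarrow> complex^'a^'a \<Rightarrow> real" where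
  "Bd Y g U = (\<Sum>j\<in>UNIV. (real CARD('a))^2 * (norm (phiU U (Y *v g j)) * norm (phiU U (g j))))"

lemma Theta_tn_Bd:
  assumes g: "onb g"
  shows "trace_norm (Theta Y U) \<le> Bd Y g U"
proof -
  have "trace_norm (Theta Y U) \<le> (\<Sum>j\<in>UNIV. norm ((real CARD('a))^2 *\<^sub>R phiU U (Y *v g j)) * norm (phiU U (g j)))"
    by (rule tn_upper[OF finite]) (simp add: Theta_mv[OF g])
  thus ?thesis unfolding Bd_def by (simp add: mult.assoc)
qed

lemma amgm: "(a::real) > 0 \<Longrightarrow> x * y \<le> (x^2 / a + a * y^2) / 2"
proof -
  assume a: "a > 0"
  have "0 \<le> (x - a * y)^2" by simp
  hence "2 * a * (x * y) \<le> x^2 + a^2 * y^2" by (simp add: power2_eq_square algebra_simps)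
  hence "x * y \<le> (x^2 + a^2 * y^2) / (2 * a)" using a by (simp add: field_simps)
  also have "\<dots> = (x^2 / a + a * y^2) / 2" using a by (simp add: field_simps power2_eq_square)
  finally show ?thesis .
qed

lemma cont_phiU: "continuous_on UNIV (\<lambda>U. phiU U w)"
  unfolding phiU_def by (intro continuous_intros)

lemma Bd_integral:
  fixes \<mu> :: "(complex^'a::finite^'a) measure"
    and Y :: "complex^('a \<times> 'c::finite \<times> 'a \<times> 'e::finite)^('a \<times> 'c \<times> 'a \<times> 'e)"
  assumes h: "is_haar \<mu>" and g: "onb g" and tnY: "trace_norm Y = (\<Sum>j\<in>UNIV. norm (Y *v g j))"
  shows "integrable \<mu> (Bd Y g) \<and> (\<integral>U. Bd Y g U \<partial>\<mu>) \<le> trace_norm Y"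
proof -
  define d where "d = real CARD('a)"
  have dpos: "d > 0" unfolding d_def by simp
  define a where "a j = norm (Y *v g j)" for j
  define c1 where "c1 j = d^2 * (if a j = 0 then 0 else 1 / (2 * a j))" for j
  define c2 where "c2 j = d^2 * (if a j = 0 then 0 else a j / 2)" for j
  define R where "R U = (\<Sum>j\<in>UNIV. c1 j * (norm (phiU U (Y *v g j)))^2 + c2 j * (norm (phiU U (g j)))^2)" for U
  have sm1: "integrable \<mu> (\<lambda>U. (norm (phiU U w))^2)" for w :: "complex^('a \<times> 'c \<times> 'a \<times> 'e)"
    using phiU_second_moment[OF h] by blast
  have sm2: "(\<integral>U. (norm (phiU U w))^2 \<partial>\<mu>) = (norm w)^2 / d^2" for w :: "complex^('a \<times> 'c \<times> 'a \<times> 'e)"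
    using phiU_second_moment[OF h] unfolding d_def by blast
  have Ri: "integrable \<mu> R" unfolding R_def using sm1 by simp
  have RI: "(\<integral>U. R U \<partial>\<mu>) = (\<Sum>j\<in>UNIV. a j)"
  proof -
    have "(\<integral>U. R U \<partial>\<mu>) = (\<Sum>j\<in>UNIV. c1 j * ((norm (Y *v g j))^2 / d^2) + c2 j * ((norm (g j))^2 / d^2))"
      unfolding R_def using sm1 sm2 by simp
    also have "\<dots> = (\<Sum>j\<in>UNIV. a j)"
    proof (intro sum.cong refl)
      fix j
      show "c1 j * ((norm (Y *v g j))^2 / d^2) + c2 j * ((norm (g j))^2 / d^2) = a j"
        using dpos onb_norm[OF g, of j] unfolding a_def[symmetric] c1_def c2_def
        by (simp add: field_simps power2_eq_square)
    qed
    finally show ?thesis .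
  qed
  have BR: "Bd Y g U \<le> R U" for U
    unfolding Bd_def R_def d_def[symmetric]
  proof (intro sum_mono)
    fix j
    show "d^2 * (norm (phiU U (Y *v g j)) * norm (phiU U (g j))) \<le> c1 j * (norm (phiU U (Y *v g j)))^2 + c2 j * (norm (phiU U (g j)))^2"
    proof (cases "a j = 0")
      case True hence "Y *v g j = 0" unfolding a_def by simp
      thus ?thesis using True by (simp add: c1_def c2_def)
    next
      case False hence apos: "a j > 0" unfolding a_def by simp
      have "norm (phiU U (Y *v g j)) * norm (phiU U (g j))
          \<le> ((norm (phiU U (Y *v g j)))^2 / a j + a j * (norm (phiU U (g j)))^2) / 2"
        by (rule amgm[OF apos])
      hence "d^2 * (norm (phiU U (Y *v g j)) * norm (phiU U (g j)))
          \<le> d^2 * (((norm (phiU U (Y *v g j)))^2 / a j + a j * (norm (phiU U (g j)))^2) / 2)"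
        by (rule mult_left_mono) simp
      also have "\<dots> = c1 j * (norm (phiU U (Y *v g j)))^2 + c2 j * (norm (phiU U (g j)))^2"
        using apos unfolding c1_def c2_def by (simp add: field_simps)
      finally show ?thesis .
    qed
  qed
  have Bnn: "Bd Y g U \<ge> 0" for U unfolding Bd_def by (simp add: sum_nonneg)
  have Bm: "Bd Y g \<in> borel_measurable \<mu>"
    unfolding Bd_def by (rule haar_meas[OF h]) (intro continuous_intros cont_phiU)
  have Bi: "integrable \<mu> (Bd Y g)"
    by (rule Bochner_Integration.integrable_bound[OF Ri Bm]) (use BR Bnn in \<open>auto intro!: AE_I2 simp: abs_of_nonneg order_trans[OF _ BR]\<close>)
  have "(\<integral>U. Bd Y g U \<partial>\<mu>) \<le> (\<integral>U. R U \<partial>\<mu>)" by (rule Bochner_Integration.integral_mono[OF Bi Ri BR])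
  also have "\<dots> = trace_norm Y" unfolding RI tnY a_def ..
  finally show ?thesis using Bi by blast
qed

definition Lf :: "('n \<Rightarrow> complex^'n) \<Rightarrow> ('n \<Rightarrow> complex^'m) \<Rightarrow> complex^'n^'m \<Rightarrow> real" where
  "Lf e f Z = Re (\<Sum>i\<in>UNIV. cip (f i) (Z *v e i))"

lemma Lf_bl: "bounded_linear (Lf e f :: complex^'n::finite^'m::finite \<Rightarrow> real)"
proof -
  have "linear (Lf e f :: complex^'n^'m \<Rightarrow> real)"
  proof (rule linearI)
    fix A B :: "complex^'n^'m"
    show "Lf e f (A + B) = Lf e f A + Lf e f B"
      unfolding Lf_def by (simp add: matrix_vector_mult_add_rdistrib cip_add_right sum.distrib)
  next
    fix c :: real and A :: "complex^'n^'m"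
    show "Lf e f (c *\<^sub>R A) = c *\<^sub>R Lf e f A"
      unfolding Lf_def by (simp add: scaleR_mv cip_scaleR_right sum_distrib_left[symmetric])
  qed
  thus ?thesis using linear_conv_bounded_linear by blast
qed

lemma Lf_diff: "Lf e f (A - B) = Lf e f A - Lf e f B"
  unfolding Lf_def by (simp add: matrix_vector_mult_diff_rdistrib cip_diff_right sum_subtractf)

lemma Lf_neg: "Lf e (\<lambda>i. - f i) Z = - Lf e f Z"
proof -
  have neg: "cip (- x) y = - cip x y" for x y :: "complex^'m"
    unfolding cip_def by (simp add: sum_negf)
  show ?thesis unfolding Lf_def by (simp add: neg sum_negf)
qed

lemma Lf_zero: "Lf e f 0 = 0"
  unfolding Lf_def by simp

theorem lemma3p3:
  fixes Y :: "complex^('a::finite \<times> 'c::finite \<times> 'a \<times> 'e::finite)^('a \<times> 'c \<times> 'a \<times> 'e)"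
    and \<mu> :: "(complex^'a^'a) measure"
  assumes "is_haar \<mu>"
  shows "(\<integral>U. trace_norm (Theta Y U) \<partial>\<mu>) \<le> trace_norm Y \<and>
         (\<integral>U. trace_norm (Theta Y U - (\<integral>V. Theta Y V \<partial>\<mu>)) \<partial>\<mu>) \<le> 2 * trace_norm Y"
proof -
  note h = assms
  obtain g where g: "onb g" and tnY: "trace_norm Y = (\<Sum>j\<in>UNIV. norm (Y *v g j))"
    using tn_basis[of Y] by blast
  define B where "B = Bd Y g"
  have Bi: "integrable \<mu> B" and BI: "(\<integral>U. B U \<partial>\<mu>) \<le> trace_norm Y"
    using Bd_integral[OF h g tnY] unfolding B_def by blast+
  have Bnn: "B U \<ge> 0" for U unfolding B_def Bd_def by (simp add: sum_nonneg)
  have TB: "trace_norm (Theta Y U) \<le> B U" for U unfolding B_def by (rule Theta_tn_Bd[OF g])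
  have first: "(\<integral>U. trace_norm (Theta Y U) \<partial>\<mu>) \<le> trace_norm Y"
  proof -
    have "(\<integral>U. trace_norm (Theta Y U) \<partial>\<mu>) \<le> (\<integral>U. B U \<partial>\<mu>)"
      by (rule integral_mono'[OF Bi TB Bnn])
    thus ?thesis using BI by linarith
  qed
  define M where "M = (\<integral>V. Theta Y V \<partial>\<mu>)"
  have negM: "- Lf e f M \<le> (\<integral>U. B U \<partial>\<mu>)"
    if e: "onb e" and fo: "\<forall>i j. i \<noteq> j \<longrightarrow> cip (f i) (f j) = 0" and fn: "\<forall>i. norm (f i) \<le> 1" for e f
  proof (cases "integrable \<mu> (Theta Y)")
    case True
    have "Lf e (\<lambda>i. - f i) M = (\<integral>V. Lf e (\<lambda>i. - f i) (Theta Y V) \<partial>\<mu>)"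
      unfolding M_def by (rule integral_bounded_linear[OF Lf_bl True, symmetric])
    also have "\<dots> \<le> (\<integral>U. B U \<partial>\<mu>)"
    proof (rule integral_mono'[OF Bi _ Bnn])
      fix V
      have fo': "\<forall>i j. i \<noteq> j \<longrightarrow> cip (- f i) (- f j) = 0" using fo
        unfolding cip_def by (simp add: sum_negf)
      have fn': "\<forall>i. norm (- f i) \<le> 1" using fn by simp
      have "Lf e (\<lambda>i. - f i) (Theta Y V) \<le> trace_norm (Theta Y V)"
        unfolding Lf_def by (rule tn_lower[OF e fo' fn'])
      thus "Lf e (\<lambda>i. - f i) (Theta Y V) \<le> B V" using TB[of V] by linarith
    qed
    finally show ?thesis by (simp add: Lf_neg)
  next
    case False
    hence "M = 0" unfolding M_def by (simp add: not_integrable_integral_eq)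
    moreover have "(\<integral>U. B U \<partial>\<mu>) \<ge> 0" using Bnn by simp
    ultimately show ?thesis by (simp add: Lf_zero)
  qed
  have TM: "trace_norm (Theta Y U - M) \<le> B U + (\<integral>U. B U \<partial>\<mu>)" for U
  proof -
    obtain e f where e: "onb e" and fo: "\<forall>i j. i \<noteq> j \<longrightarrow> cip (f i) (f j) = 0"
      and fn: "\<forall>i. norm (f i) \<le> 1" and tn: "trace_norm (Theta Y U - M) = Lf e f (Theta Y U - M)"
      using tn_attained[of "Theta Y U - M"] unfolding Lf_def by blast
    have "Lf e f (Theta Y U) \<le> trace_norm (Theta Y U)" unfolding Lf_def by (rule tn_lower[OF e fo fn])
    thus ?thesis using tn Lf_diff[of e f "Theta Y U" M] negM[OF e fo fn] TB[of U] by linarith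
  qed
  have second: "(\<integral>U. trace_norm (Theta Y U - M) \<partial>\<mu>) \<le> 2 * trace_norm Y"
  proof -
    have ic: "integrable \<mu> (\<lambda>U. (\<integral>U. B U \<partial>\<mu>))"
      by (rule finite_measure.integrable_const[OF haar_fin[OF h]])
    have i2: "integrable \<mu> (\<lambda>U. B U + (\<integral>U. B U \<partial>\<mu>))"
      by (rule Bochner_Integration.integrable_add[OF Bi ic])
    have nn2: "0 \<le> B U + (\<integral>U. B U \<partial>\<mu>)" for U using Bnn by simp
    have "(\<integral>U. trace_norm (Theta Y U - M) \<partial>\<mu>) \<le> (\<integral>U. B U + (\<integral>U. B U \<partial>\<mu>) \<partial>\<mu>)"
      by (rule integral_mono'[OF i2 TM nn2])
    also have "\<dots> = (\<integral>U. B U \<partial>\<mu>) + (\<integral>U. (\<integral>U. B U \<partial>\<mu>) \<partial>\<mu>)"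
      by (rule Bochner_Integration.integral_add[OF Bi ic])
    also have "(\<integral>U. (\<integral>U. B U \<partial>\<mu>) \<partial>\<mu>) = (\<integral>U. B U \<partial>\<mu>)"
      using prob_space.prob_space[OF haar_prob[OF h]] by simp
    finally show ?thesis using BI by linarith
  qed
  show ?thesis using first second unfolding M_def by blast
qed

end
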